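(* Let $G_1=(\{p_j\},\{\mu_j\},\{\sigma_j^2\})_{j=1}^n$ and $G_2=(\{p'_k\},\{\mu'_k\},\{\sigma_k'^2\})_{k=1}^{n'}$ be univariate Gaussian mixtures with all $\sigma_j>0$ and $\sigma'_k>0$, and let $L=C_2^2(G_1,G_2)$, regarded as a function of the parameters $\mu_1,\dots,\mu_n,\sigma_1,\dots,\sigma_n$ of $G_1$ (with $G_2$ and $\{p_j\}$ fixed). Then for every $j=1,\dots,n$, $$\left|\frac{\partial L}{\partial\mu_j}\right|\le 4,\qquad \left|\frac{\partial L}{\partial\sigma_j}\right|\le 4.$$ In particular $L$ is globally Lipschitz in $\{\mu_j\}$ and $\{\sigma_j\}$.
   Context: A univariate Gaussian mixture $G=(\{p_j\},\{\mu_j\},\{\sigma_j^2\})_{j=1}^n$ has $p_j\ge0$, $\sum_jp_j=1$, $\mu_j\in\mathbb{R}$, $\sigma_j>0$, and CDF $\sum_jp_j\Phi((x-\mu_j)/\sigma_j)$, with $\Phi$ the standard normal CDF. The Cramér 2-distance is $C_2(G_1,G_2)=\left(\int_{\mathbb{R}}|\mathrm{CDF}(G_1)-\mathrm{CDF}(G_2)|^2dx\right)^{1/2}$. *)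

theory Defs
  imports "HOL-Probability.Probability"
begin

definition std_normal_cdf :: "real \<Rightarrow> real" where
  "std_normal_cdf x = (LBINT t:{..x}. std_normal_density t)"

definition gm_cdf :: "nat \<Rightarrow> (nat \<Rightarrow> real) \<Rightarrow> (nat \<Rightarrow> real) \<Rightarrow> (nat \<Rightarrow> real) \<Rightarrow> real \<Rightarrow> real" where
  "gm_cdf n p mu sg x = (\<Sum>j<n. p j * std_normal_cdf ((x - mu j) / sg j))"

definition is_gm :: "nat \<Rightarrow> (nat \<Rightarrow> real) \<Rightarrow> (nat \<Rightarrow> real) \<Rightarrow> bool" where
  "is_gm n p sg \<longleftrightarrow> (\<forall>j<n. p j \<ge> 0 \<and> sg j > 0) \<and> (\<Sum>j<n. p j) = 1"

definition cramer2_sq ::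
  "nat \<Rightarrow> (nat \<Rightarrow> real) \<Rightarrow> (nat \<Rightarrow> real) \<Rightarrow> (nat \<Rightarrow> real) \<Rightarrow>
   nat \<Rightarrow> (nat \<Rightarrow> real) \<Rightarrow> (nat \<Rightarrow> real) \<Rightarrow> (nat \<Rightarrow> real) \<Rightarrow> real" where
  "cramer2_sq n p mu sg n' p' mu' sg' =
     (LBINT x. \<bar>gm_cdf n p mu sg x - gm_cdf n' p' mu' sg' x\<bar>\<^sup>2)"

end

theory Submission
  imports Defs
begin


lemma deriv_int:
  fixes g g' :: "real \<Rightarrow> real \<Rightarrow> real" and w :: "real \<Rightarrow> real" and t0 \<delta> :: real
  assumes \<delta>: "\<delta> > 0"
  and meas: "\<And>t. g t \<in> borel_measurable lborel"
  and meas': "g' t0 \<in> borel_measurable lborel"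
  and int0: "integrable lborel (g t0)"
  and intw: "integrable lborel w"
  and der: "\<And>t x. \<bar>t - t0\<bar> < \<delta> \<Longrightarrow> ((\<lambda>t. g t x) has_real_derivative g' t x) (at t)"
  and bnd: "\<And>t x. \<bar>t - t0\<bar> < \<delta> \<Longrightarrow> \<bar>g' t x\<bar> \<le> w x"
  shows "((\<lambda>t. LINT x|lborel. g t x) has_real_derivative (LINT x|lborel. g' t0 x)) (at t0)"
proof -
  have mvt: "\<bar>g t x - g t0 x\<bar> \<le> w x * \<bar>t - t0\<bar>" if t: "\<bar>t - t0\<bar> < \<delta>" for t x
  proof (cases "t < t0")
    case True
    obtain z where z: "t < z" "z < t0" "g t0 x - g t x = (t0 - t) * g' z x"
      using MVT2[OF True, of "\<lambda>t. g t x" "\<lambda>z. g' z x"] der t by fastforce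
    have "\<bar>g' z x\<bar> \<le> w x" using bnd[of z x] z t by auto
    then show ?thesis using z True
      by (simp add: abs_minus_commute abs_mult mult.commute mult_left_mono)
  next
    case False
    show ?thesis
    proof (cases "t = t0")
      case True then show ?thesis using bnd[of t0 x] \<delta> by auto
    next
      case False
      then have lt: "t0 < t" using \<open>\<not> t < t0\<close> by auto
      obtain z where z: "t0 < z" "z < t" "g t x - g t0 x = (t - t0) * g' z x"
        using MVT2[OF lt, of "\<lambda>t. g t x" "\<lambda>z. g' z x"] der t by fastforce
      have "\<bar>g' z x\<bar> \<le> w x" using bnd[of z x] z t by auto
      then show ?thesis using z lt
        by (simp add: abs_mult mult.commute mult_left_mono)
    qed
  qed
  have intt: "integrable lborel (g t)" if t: "\<bar>t - t0\<bar> < \<delta>" for t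
  proof -
    have "integrable lborel (\<lambda>x. g t x - g t0 x)"
      by (rule Bochner_Integration.integrable_bound[of _ "\<lambda>x. w x * \<bar>t - t0\<bar>"])
         (use intw meas int0 mvt[OF t] in \<open>auto intro: order_trans[OF _ abs_ge_self]\<close>)
    then have "integrable lborel (\<lambda>x. (g t x - g t0 x) + g t0 x)"
      using int0 by (rule Bochner_Integration.integrable_add)
    then show ?thesis by simp
  qed
  show ?thesis
    unfolding has_field_derivative_iff tendsto_at_iff_sequentially
  proof (intro allI impI)
    fix X :: "nat \<Rightarrow> real"
    assume X: "\<forall>i. X i \<in> UNIV - {t0}" and lim: "X \<longlonglongrightarrow> t0"
    have ev: "eventually (\<lambda>i. \<bar>X i - t0\<bar> < \<delta>) sequentially"
      using lim \<delta> unfolding LIMSEQ_iff_nz by (auto simp: dist_real_def eventually_sequentially)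
    define q where "q i x = (if \<bar>X i - t0\<bar> < \<delta> then (g (X i) x - g t0 x) / (X i - t0) else g' t0 x)" for i x
    have qm: "q i \<in> borel_measurable lborel" for i
      unfolding q_def by (cases "\<bar>X i - t0\<bar> < \<delta>") (use meas meas' in auto)
    have qb: "AE x in lborel. norm (q i x) \<le> w x" for i
    proof (intro AE_I2)
      fix x
      show "norm (q i x) \<le> w x"
      proof (cases "\<bar>X i - t0\<bar> < \<delta>")
        case True
        have ne: "X i - t0 \<noteq> 0" using X by auto
        have "\<bar>(g (X i) x - g t0 x) / (X i - t0)\<bar> \<le> w x"
          using mvt[OF True, of x] ne by (simp add: abs_divide divide_le_eq)
        then show ?thesis using True by (simp add: q_def)
      next
        case False then show ?thesis using bnd[of t0 x] \<delta> by (simp add: q_def)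
      qed
    qed
    have ql: "AE x in lborel. (\<lambda>i. q i x) \<longlonglongrightarrow> g' t0 x"
    proof (intro AE_I2)
      fix x
      have d: "((\<lambda>y. (g y x - g t0 x) / (y - t0)) \<longlongrightarrow> g' t0 x) (at t0)"
        using der[of t0 x] \<delta> unfolding has_field_derivative_iff by simp
      have "(\<lambda>i. (g (X i) x - g t0 x) / (X i - t0)) \<longlonglongrightarrow> g' t0 x"
        using d X lim unfolding tendsto_at_iff_sequentially comp_def by auto
      then show "(\<lambda>i. q i x) \<longlonglongrightarrow> g' t0 x"
        by (rule Lim_transform_eventually) (use ev in \<open>auto simp: q_def elim: eventually_mono\<close>)
    qed
    have conv: "(\<lambda>i. integral\<^sup>L lborel (q i)) \<longlonglongrightarrow> integral\<^sup>L lborel (g' t0)"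
      by (rule integral_dominated_convergence[OF meas' qm intw ql qb])
    have eq: "eventually (\<lambda>i. integral\<^sup>L lborel (q i) =
        ((LINT x|lborel. g (X i) x) - (LINT x|lborel. g t0 x)) / (X i - t0)) sequentially"
      using ev
    proof (rule eventually_mono)
      fix i assume i: "\<bar>X i - t0\<bar> < \<delta>"
      have "integral\<^sup>L lborel (q i) = (LINT x|lborel. (g (X i) x - g t0 x) / (X i - t0))"
        using i by (intro arg_cong[where f="integral\<^sup>L lborel"]) (auto simp: q_def fun_eq_iff)
      also have "\<dots> = (LINT x|lborel. (g (X i) x - g t0 x)) / (X i - t0)"
        by simp
      also have "\<dots> = ((LINT x|lborel. g (X i) x) - (LINT x|lborel. g t0 x)) / (X i - t0)"
        using intt[OF i] int0 by simp
      finally show "integral\<^sup>L lborel (q i) =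
        ((LINT x|lborel. g (X i) x) - (LINT x|lborel. g t0 x)) / (X i - t0)" .
    qed
    show "((\<lambda>y. ((LINT x|lborel. g y x) - (LINT x|lborel. g t0 x)) / (y - t0)) \<circ> X)
          \<longlonglongrightarrow> (LINT x|lborel. g' t0 x)"
      unfolding comp_def
      by (rule Lim_transform_eventually[OF conv]) (use eq in \<open>auto elim: eventually_mono\<close>)
  qed
qed

lemma std_normal_density_cont: "continuous_on UNIV std_normal_density"
  unfolding normal_density_def by (intro continuous_intros) auto

lemma Phi_split:
  assumes "a \<le> v"
  shows "std_normal_cdf v = std_normal_cdf a + integral {a..v} std_normal_density"
proof -
  have intU: "integrable lborel std_normal_density" by simp
  have si: "set_integrable lborel A std_normal_density" if "A \<in> sets lborel" for A
    unfolding set_integrable_def using integrable_mult_indicator[OF that intU] .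
  have "std_normal_cdf v = (LBINT t:{..a} \<union> {a..v}. std_normal_density t)"
  proof -
    have "{..a} \<union> {a..v} = {..v}" using assms by auto
    then show ?thesis unfolding std_normal_cdf_def by simp
  qed
  also have "\<dots> = (LBINT t:{..a}. std_normal_density t) + (LBINT t:{a..v}. std_normal_density t)"
    by (rule set_integral_Un_AE) (auto intro!: si AE_I'[of "{a}"] simp: )
  also have "(LBINT t:{a..v}. std_normal_density t) = integral {a..v} std_normal_density"
    by (rule set_borel_integral_eq_integral(2)) (auto intro!: si)
  finally show ?thesis unfolding std_normal_cdf_def .
qed

lemma DERIV_Phi_basic: "(std_normal_cdf has_real_derivative std_normal_density u) (at u)"
proof -
  have d: "((\<lambda>v. std_normal_cdf (u - 1) + integral {u - 1..v} std_normal_density)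
          has_real_derivative std_normal_density u) (at u within {u - 1..u + 1})"
    by (auto intro!: derivative_eq_intros integral_has_real_derivative
          continuous_on_subset[OF std_normal_density_cont])
  then have d2: "((\<lambda>v. std_normal_cdf (u - 1) + integral {u - 1..v} std_normal_density)
          has_real_derivative std_normal_density u) (at u)"
    by (subst (asm) at_within_Icc_at) auto
  show ?thesis
    by (rule has_field_derivative_transform_within_open[OF d2, of "{u - 1<..<u+1}"])
       (auto intro: Phi_split[symmetric])
qed

lemma Phi_nonneg: "0 \<le> std_normal_cdf x"
  unfolding std_normal_cdf_def set_lebesgue_integral_def
  by (intro integral_nonneg_AE) (auto simp: indicator_def)

lemma Phi_le1: "std_normal_cdf x \<le> 1"
proof -
  have "std_normal_cdf x \<le> (LINT t|lborel. std_normal_density t)"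
    unfolding std_normal_cdf_def set_lebesgue_integral_def
    by (intro integral_mono integrable_mult_indicator) (auto simp: indicator_def)
  then show ?thesis by simp
qed

lemma Phi_cont: "continuous_on UNIV std_normal_cdf"
  using DERIV_Phi_basic by (meson DERIV_continuous continuous_at_imp_continuous_on)

lemma Phi_meas[measurable]: "std_normal_cdf \<in> borel_measurable borel"
  by (rule borel_measurable_continuous_onI[OF Phi_cont])

lemma DERIV_Phi[derivative_intros]:
  "(f has_real_derivative f') (at x within S) \<Longrightarrow>
   ((\<lambda>x. std_normal_cdf (f x)) has_real_derivative (std_normal_density (f x) * f')) (at x within S)"
  by (rule DERIV_chain2[OF DERIV_Phi_basic])

lemma nd_eq: "\<sigma> > 0 \<Longrightarrow> normal_density m \<sigma> x = std_normal_density ((x - m) / \<sigma>) / \<sigma>"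
  unfolding normal_density_def by (simp add: real_sqrt_mult power_divide)

lemma int_gauss: "(a::real) > 0 \<Longrightarrow> integrable lborel (\<lambda>x. exp (- a * (x - m)\<^sup>2))"
proof -
  assume a: "a > 0"
  define s where "s = sqrt (1 / (2 * a))"
  have s: "s > 0" "s\<^sup>2 = 1 / (2 * a)" using a by (auto simp: s_def)
  have i: "integrable lborel (\<lambda>x. sqrt (2 * pi * s\<^sup>2) * normal_density m s x)"
    by (rule Bochner_Integration.integrable_mult_right, rule integrable_normal_density, use s in auto)
  moreover have e: "sqrt (2 * pi * s\<^sup>2) * normal_density m s x = exp (- a * (x - m)\<^sup>2)" for x
  proof -
    have pos: "sqrt (2 * pi * s\<^sup>2) > 0" using s a pi_gt_zero by (intro real_sqrt_gt_zero) simp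
    have e: "-(x - m)\<^sup>2 / (2 * s\<^sup>2) = - a * (x - m)\<^sup>2" using s a by (simp add: field_simps)
    show ?thesis unfolding normal_density_def e using pos s a by simp
  qed
  ultimately show ?thesis by (simp only: e)
qed

lemma int_gauss_abs: "(a::real) > 0 \<Longrightarrow> integrable lborel (\<lambda>x. \<bar>x - m\<bar> * exp (- a * (x - m)\<^sup>2))"
proof -
  assume a: "a > 0"
  define s where "s = sqrt (1 / (2 * a))"
  have s: "s > 0" "s\<^sup>2 = 1 / (2 * a)" using a by (auto simp: s_def)
  have i: "integrable lborel (\<lambda>x. sqrt (2 * pi * s\<^sup>2) * (normal_density m s x * \<bar>x - m\<bar>^1))"
    by (rule Bochner_Integration.integrable_mult_right, rule integrable_normal_moment_abs, use s in auto)
  moreover have e: "sqrt (2 * pi * s\<^sup>2) * (normal_density m s x * \<bar>x - m\<bar>^1) = \<bar>x - m\<bar> * exp (- a * (x - m)\<^sup>2)" for x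
  proof -
    have pos: "sqrt (2 * pi * s\<^sup>2) > 0" using s a pi_gt_zero by (intro real_sqrt_gt_zero) simp
    have e: "-(x - m)\<^sup>2 / (2 * s\<^sup>2) = - a * (x - m)\<^sup>2" using s a by (simp add: field_simps)
    show ?thesis unfolding normal_density_def e using pos s a by simp
  qed
  ultimately show ?thesis by (simp only: e)
qed

lemma phi_le_exp: "std_normal_density z \<le> exp (- z\<^sup>2 / 2)"
proof -
  have "1 / sqrt (2 * pi) \<le> 1" using pi_gt3 by (simp add: divide_le_eq)
  then show ?thesis unfolding std_normal_density_def
    by (intro mult_left_le_one_le) auto
qed

lemma Phi_compare:
  fixes \<mu> \<sigma> :: real
  assumes \<sigma>: "\<sigma> > 0"
  shows "\<exists>w. integrable lborel w \<and> (\<forall>x. \<bar>std_normal_cdf ((x - \<mu>) / \<sigma>) - std_normal_cdf x\<bar> \<le> w x)"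
proof -
  define lo where "lo = min 1 \<sigma>"
  define hi where "hi = max 1 \<sigma>"
  have lo: "lo > 0" "lo \<le> hi" "hi \<ge> 1" using \<sigma> by (auto simp: lo_def hi_def)
  define E where "E = exp (\<mu>\<^sup>2 / (2 * hi\<^sup>2))"
  define b where "b = 1 / (4 * hi\<^sup>2)"
  have b: "b > 0" using lo by (simp add: b_def)
  define w where "w x = E * exp (- b * (x - 0)\<^sup>2) * (\<bar>\<mu>\<bar> * hi + (\<bar>x - 0\<bar> + \<bar>\<mu>\<bar>) * \<bar>\<sigma> - 1\<bar>) / lo\<^sup>2" for x
  have weq: "w x = (E * (\<bar>\<mu>\<bar> * hi + \<bar>\<mu>\<bar> * \<bar>\<sigma> - 1\<bar>) / lo\<^sup>2) * exp (- b * (x - 0)\<^sup>2)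
       + (E * \<bar>\<sigma> - 1\<bar> / lo\<^sup>2) * (\<bar>x - 0\<bar> * exp (- b * (x - 0)\<^sup>2))" for x
    unfolding w_def using lo by (simp add: field_simps)
  have intw: "integrable lborel w"
    unfolding weq[abs_def]
    by (intro Bochner_Integration.integrable_add Bochner_Integration.integrable_mult_right
        int_gauss int_gauss_abs b)
  have bound: "\<bar>std_normal_cdf ((x - \<mu>) / \<sigma>) - std_normal_cdf x\<bar> \<le> w x" for x
  proof -
    define s where "s t = 1 + t * (\<sigma> - 1)" for t
    define z where "z t = (x - t * \<mu>) / s t" for t
    define f' where "f' t = std_normal_density (z t) * ((- \<mu> * s t - (x - t * \<mu>) * (\<sigma> - 1)) / (s t)\<^sup>2)" for t
    have s_bnd: "lo \<le> s t \<and> s t \<le> hi" if "0 \<le> t" "t \<le> 1" for t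
    proof -
      have "s t = (1 - t) * 1 + t * \<sigma>" by (simp add: s_def algebra_simps)
      moreover have "(1 - t) * lo + t * lo \<le> (1 - t) * 1 + t * \<sigma>"
        using that by (intro add_mono mult_left_mono) (auto simp: lo_def)
      moreover have "(1 - t) * 1 + t * \<sigma> \<le> (1 - t) * hi + t * hi"
        using that by (intro add_mono mult_left_mono) (auto simp: hi_def)
      ultimately show ?thesis by (simp add: algebra_simps)
    qed
    have der: "((\<lambda>t. std_normal_cdf ((x - t * \<mu>) / (1 + t * (\<sigma> - 1)))) has_real_derivative f' t) (at t)"
      if "0 \<le> t" "t \<le> 1" for t
    proof -
      have sp: "s t > 0" using s_bnd[OF that] lo by auto
      have ne: "1 + t * (\<sigma> - 1) \<noteq> 0" using sp by (simp add: s_def)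
      have d1: "((\<lambda>t. x - t * \<mu>) has_real_derivative - \<mu>) (at t)"
        by (rule DERIV_cong, (rule derivative_eq_intros refl)+) simp
      have d2: "((\<lambda>t. 1 + t * (\<sigma> - 1)) has_real_derivative (\<sigma> - 1)) (at t)"
        by (rule DERIV_cong, (rule derivative_eq_intros refl)+) simp
      have d3: "((\<lambda>t. (x - t * \<mu>) / (1 + t * (\<sigma> - 1))) has_real_derivative
          ((- \<mu> * s t - (x - t * \<mu>) * (\<sigma> - 1)) / (s t)\<^sup>2)) (at t)"
        using DERIV_divide[OF d1 d2 ne] by (simp add: s_def power2_eq_square)
      show ?thesis
        using DERIV_chain2[OF DERIV_Phi_basic d3] unfolding f'_def z_def s_def by simp
    qed
    obtain t where t: "0 < t" "t < 1"
      "std_normal_cdf ((x - 1 * \<mu>) / (1 + 1 * (\<sigma> - 1))) - std_normal_cdf ((x - 0 * \<mu>) / (1 + 0 * (\<sigma> - 1)))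
        = (1 - 0) * f' t"
      using MVT2[of 0 1 "\<lambda>t. std_normal_cdf ((x - t * \<mu>) / (1 + t * (\<sigma> - 1)))" f'] der by auto
    have eq: "std_normal_cdf ((x - \<mu>) / \<sigma>) - std_normal_cdf x = f' t" using t by simp
    have sb: "lo \<le> s t" "s t \<le> hi" using s_bnd[of t] t by auto
    have sp: "s t > 0" using sb lo by auto
    have "(x - t * \<mu>)\<^sup>2 \<ge> x\<^sup>2 / 2 - \<mu>\<^sup>2"
    proof -
      have id: "2 * (x - t * \<mu>)\<^sup>2 + 2 * (t * \<mu>)\<^sup>2 - x\<^sup>2 = (x - 2 * t * \<mu>)\<^sup>2"
        by (simp add: power2_eq_square algebra_simps)
      have "x\<^sup>2 \<le> 2 * (x - t * \<mu>)\<^sup>2 + 2 * (t * \<mu>)\<^sup>2"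
        using id zero_le_power2[of "x - 2 * t * \<mu>"] by linarith
      moreover have "(t * \<mu>)\<^sup>2 \<le> \<mu>\<^sup>2"
      proof -
        have "t\<^sup>2 \<le> 1" using t by (intro power_le_one) auto
        then have "t\<^sup>2 * \<mu>\<^sup>2 \<le> 1 * \<mu>\<^sup>2" by (intro mult_right_mono) auto
        then show ?thesis by (simp add: power_mult_distrib)
      qed
      ultimately show ?thesis by simp
    qed
    moreover have "(z t)\<^sup>2 \<ge> (x - t * \<mu>)\<^sup>2 / hi\<^sup>2"
    proof -
      have "(s t)\<^sup>2 \<le> hi\<^sup>2" using sb sp by (intro power_mono) auto
      then have "(x - t * \<mu>)\<^sup>2 / hi\<^sup>2 \<le> (x - t * \<mu>)\<^sup>2 / (s t)\<^sup>2"
        using sp lo by (intro divide_left_mono) (auto intro: mult_pos_pos)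
      then show ?thesis by (simp add: z_def power_divide)
    qed
    ultimately have zz: "(x\<^sup>2 / 2 - \<mu>\<^sup>2) / hi\<^sup>2 \<le> (z t)\<^sup>2"
      using lo by (meson divide_right_mono order_trans zero_le_power2)
    have zeq: "(x\<^sup>2 / 2 - \<mu>\<^sup>2) / hi\<^sup>2 = 2 * (b * x\<^sup>2) - 2 * (\<mu>\<^sup>2 / (2 * hi\<^sup>2))"
      using lo unfolding b_def by (simp add: field_simps)
    have zb: "- (z t)\<^sup>2 / 2 \<le> \<mu>\<^sup>2 / (2 * hi\<^sup>2) + - b * (x - 0)\<^sup>2"
      using zz zeq by simp
    have phb: "std_normal_density (z t) \<le> E * exp (- b * (x - 0)\<^sup>2)"
    proof -
      have "std_normal_density (z t) \<le> exp (- (z t)\<^sup>2 / 2)" by (rule phi_le_exp)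
      also have "\<dots> \<le> exp (\<mu>\<^sup>2 / (2 * hi\<^sup>2) + - b * (x - 0)\<^sup>2)" using zb by simp
      also have "\<dots> = E * exp (- b * (x - 0)\<^sup>2)" unfolding E_def by (rule exp_add)
      finally show ?thesis .
    qed
    have nb: "\<bar>(- \<mu> * s t - (x - t * \<mu>) * (\<sigma> - 1))\<bar> \<le> \<bar>\<mu>\<bar> * hi + (\<bar>x - 0\<bar> + \<bar>\<mu>\<bar>) * \<bar>\<sigma> - 1\<bar>"
    proof -
      have "\<bar>- \<mu> * s t\<bar> \<le> \<bar>\<mu>\<bar> * hi" using sb sp by (simp add: abs_mult mult_left_mono)
      moreover have "\<bar>x - t * \<mu>\<bar> \<le> \<bar>x\<bar> + \<bar>\<mu>\<bar>"
      proof -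
        have "\<bar>t * \<mu>\<bar> \<le> \<bar>\<mu>\<bar>" using t by (simp add: abs_mult mult_left_le_one_le)
        then show ?thesis by linarith
      qed
      then have "\<bar>(x - t * \<mu>) * (\<sigma> - 1)\<bar> \<le> (\<bar>x\<bar> + \<bar>\<mu>\<bar>) * \<bar>\<sigma> - 1\<bar>"
        by (simp add: abs_mult mult_right_mono)
      moreover have "\<bar>- \<mu> * s t - (x - t * \<mu>) * (\<sigma> - 1)\<bar> \<le> \<bar>- \<mu> * s t\<bar> + \<bar>(x - t * \<mu>) * (\<sigma> - 1)\<bar>"
        by (rule abs_triangle_ineq4)
      ultimately show ?thesis unfolding diff_zero by linarith
    qed
    have "\<bar>f' t\<bar> = std_normal_density (z t) * \<bar>- \<mu> * s t - (x - t * \<mu>) * (\<sigma> - 1)\<bar> / (s t)\<^sup>2"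
      unfolding f'_def by (simp add: abs_mult abs_divide)
    also have "\<dots> \<le> (E * exp (- b * (x - 0)\<^sup>2)) * (\<bar>\<mu>\<bar> * hi + (\<bar>x - 0\<bar> + \<bar>\<mu>\<bar>) * \<bar>\<sigma> - 1\<bar>) / lo\<^sup>2"
    proof (intro frac_le mult_mono phb nb)
      show "lo\<^sup>2 \<le> (s t)\<^sup>2" using sb lo by (intro power_mono) auto
    qed (use lo in \<open>auto simp: E_def\<close>)
    finally show ?thesis using eq by (simp add: w_def)
  qed
  show ?thesis using intw bound by blast
qed

lemma gm_meas[measurable]: "(\<lambda>x. gm_cdf n p mu sg x) \<in> borel_measurable borel"
  unfolding gm_cdf_def by measurable

lemma gm_bounds:
  assumes "\<forall>j<n. 0 \<le> p j" "(\<Sum>j<n. p j) = 1"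
  shows "0 \<le> gm_cdf n p mu sg x" "gm_cdf n p mu sg x \<le> 1"
proof -
  show "0 \<le> gm_cdf n p mu sg x" unfolding gm_cdf_def
    using assms by (intro sum_nonneg) (auto intro!: mult_nonneg_nonneg Phi_nonneg)
  have "gm_cdf n p mu sg x \<le> (\<Sum>j<n. p j)" unfolding gm_cdf_def
    using assms by (intro sum_mono) (auto intro: mult_right_le_one_le Phi_nonneg Phi_le1)
  then show "gm_cdf n p mu sg x \<le> 1" using assms by simp
qed

lemma gm_compare:
  assumes "is_gm n p sg"
  shows "\<exists>w. integrable lborel w \<and> (\<forall>x. \<bar>gm_cdf n p mu sg x - std_normal_cdf x\<bar> \<le> w x)"
proof -
  have p: "\<forall>j<n. 0 \<le> p j \<and> sg j > 0" "(\<Sum>j<n. p j) = 1" using assms by (auto simp: is_gm_def)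
  have "\<forall>j. \<exists>w. j < n \<longrightarrow> integrable lborel w \<and>
     (\<forall>x. \<bar>std_normal_cdf ((x - mu j) / sg j) - std_normal_cdf x\<bar> \<le> w x)"
    using Phi_compare p(1) by blast
  then obtain W where W: "\<And>j. j < n \<Longrightarrow> integrable lborel (W j) \<and>
     (\<forall>x. \<bar>std_normal_cdf ((x - mu j) / sg j) - std_normal_cdf x\<bar> \<le> W j x)"
    by metis
  define w where "w x = (\<Sum>j<n. p j * W j x)" for x
  have "integrable lborel w" unfolding w_def[abs_def]
    using W by (intro Bochner_Integration.integrable_sum Bochner_Integration.integrable_mult_right) auto
  moreover have "\<bar>gm_cdf n p mu sg x - std_normal_cdf x\<bar> \<le> w x" for x
  proof -
    have "gm_cdf n p mu sg x - std_normal_cdf x =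
        (\<Sum>j<n. p j * (std_normal_cdf ((x - mu j) / sg j) - std_normal_cdf x))"
      using p(2) by (simp add: gm_cdf_def right_diff_distrib sum_subtractf flip: sum_distrib_right)
    also have "\<bar>\<dots>\<bar> \<le> (\<Sum>j<n. \<bar>p j * (std_normal_cdf ((x - mu j) / sg j) - std_normal_cdf x)\<bar>)"
      by (rule sum_abs)
    also have "\<dots> \<le> w x" unfolding w_def
      using W p(1) by (intro sum_mono) (auto simp: abs_mult intro!: mult_left_mono)
    finally show ?thesis .
  qed
  ultimately show ?thesis by blast
qed

lemma cramer_integrable:
  assumes "is_gm n p sg" "is_gm n' p' sg'"
  shows "integrable lborel (\<lambda>x. (gm_cdf n p mu sg x - gm_cdf n' p' mu' sg' x)\<^sup>2)"
proof -
  obtain w1 where w1: "integrable lborel w1" "\<And>x. \<bar>gm_cdf n p mu sg x - std_normal_cdf x\<bar> \<le> w1 x"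
    using gm_compare[OF assms(1)] by blast
  obtain w2 where w2: "integrable lborel w2" "\<And>x. \<bar>gm_cdf n' p' mu' sg' x - std_normal_cdf x\<bar> \<le> w2 x"
    using gm_compare[OF assms(2)] by blast
  show ?thesis
  proof (rule Bochner_Integration.integrable_bound[of _ "\<lambda>x. w1 x + w2 x"])
    show "integrable lborel (\<lambda>x. w1 x + w2 x)" using w1 w2 by auto
    show "(\<lambda>x. (gm_cdf n p mu sg x - gm_cdf n' p' mu' sg' x)\<^sup>2) \<in> borel_measurable lborel"
      by measurable
    show "AE x in lborel. norm ((gm_cdf n p mu sg x - gm_cdf n' p' mu' sg' x)\<^sup>2) \<le> norm (w1 x + w2 x)"
    proof (intro AE_I2)
      fix x
      let ?d = "gm_cdf n p mu sg x - gm_cdf n' p' mu' sg' x"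
      have b1: "0 \<le> gm_cdf n p mu sg x" "gm_cdf n p mu sg x \<le> 1"
        using assms(1) by (auto simp: is_gm_def intro!: gm_bounds)
      have b2: "0 \<le> gm_cdf n' p' mu' sg' x" "gm_cdf n' p' mu' sg' x \<le> 1"
        using assms(2) by (auto simp: is_gm_def intro!: gm_bounds)
      have d1: "\<bar>?d\<bar> \<le> 1" using b1 b2 by linarith
      have "?d\<^sup>2 = \<bar>?d\<bar> * \<bar>?d\<bar>" by (simp add: power2_eq_square abs_mult_self)
      also have "\<dots> \<le> \<bar>?d\<bar>" using d1 by (intro mult_left_le_one_le) auto
      also have "\<dots> \<le> w1 x + w2 x" using w1(2)[of x] w2(2)[of x] by linarith
      finally show "norm (?d\<^sup>2) \<le> norm (w1 x + w2 x)" by simp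
    qed
  qed
qed

lemma main_deriv:
  fixes u u' :: "real \<Rightarrow> real \<Rightarrow> real" and v k :: "real \<Rightarrow> real"
  assumes \<delta>: "\<delta> > 0"
  and meas: "\<And>t. u t \<in> borel_measurable lborel"
  and meas': "u' t0 \<in> borel_measurable lborel"
  and int0: "integrable lborel (\<lambda>x. (u t0 x)\<^sup>2)"
  and ub: "\<And>t x. \<bar>u t x\<bar> \<le> 1"
  and der: "\<And>t x. \<bar>t - t0\<bar> < \<delta> \<Longrightarrow> ((\<lambda>t. u t x) has_real_derivative u' t x) (at t)"
  and bnd: "\<And>t x. \<bar>t - t0\<bar> < \<delta> \<Longrightarrow> \<bar>u' t x\<bar> \<le> v x"
  and intv: "integrable lborel v"
  and b0: "\<And>x. \<bar>u' t0 x\<bar> \<le> k x"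
  and intk: "integrable lborel k"
  and k1: "(LINT x|lborel. k x) \<le> 1"
  shows "\<exists>D. ((\<lambda>t. LINT x|lborel. (u t x)\<^sup>2) has_real_derivative D) (at t0) \<and> \<bar>D\<bar> \<le> 4"
proof -
  have d: "((\<lambda>t. LINT x|lborel. (u t x)\<^sup>2) has_real_derivative
       (LINT x|lborel. 2 * u t0 x * u' t0 x)) (at t0)"
  proof (rule deriv_int[where w="\<lambda>x. 2 * v x", OF \<delta>])
    show "(\<lambda>x. (u t x)\<^sup>2) \<in> borel_measurable lborel" for t using meas[of t] by measurable
    show "(\<lambda>x. 2 * u t0 x * u' t0 x) \<in> borel_measurable lborel"
      using meas[of t0] meas' by measurable
    show "integrable lborel (\<lambda>x. (u t0 x)\<^sup>2)" by (rule int0)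
    show "integrable lborel (\<lambda>x. 2 * v x)" using intv by simp
    show "((\<lambda>t. (u t x)\<^sup>2) has_real_derivative 2 * u t x * u' t x) (at t)"
      if "\<bar>t - t0\<bar> < \<delta>" for t x
      using der[OF that, of x] by (auto intro!: derivative_eq_intros)
    show "\<bar>2 * u t x * u' t x\<bar> \<le> 2 * v x" if "\<bar>t - t0\<bar> < \<delta>" for t x
    proof -
      have "\<bar>u t x * u' t x\<bar> \<le> 1 * v x"
        unfolding abs_mult using ub[of t x] bnd[OF that, of x] by (intro mult_mono) auto
      then show ?thesis by (simp add: abs_mult)
    qed
  qed
  have intg: "integrable lborel (\<lambda>x. 2 * u t0 x * u' t0 x)"
  proof (rule Bochner_Integration.integrable_bound[of _ "\<lambda>x. 2 * k x"])
    show "integrable lborel (\<lambda>x. 2 * k x)" using intk by simp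
    show "(\<lambda>x. 2 * u t0 x * u' t0 x) \<in> borel_measurable lborel"
      using meas[of t0] meas' by measurable
    show "AE x in lborel. norm (2 * u t0 x * u' t0 x) \<le> norm (2 * k x)"
    proof (intro AE_I2)
      fix x
      have "\<bar>u t0 x * u' t0 x\<bar> \<le> 1 * k x"
        unfolding abs_mult using ub[of t0 x] b0[of x] by (intro mult_mono) auto
      then show "norm (2 * u t0 x * u' t0 x) \<le> norm (2 * k x)" by (simp add: abs_mult)
    qed
  qed
  have "\<bar>LINT x|lborel. 2 * u t0 x * u' t0 x\<bar> \<le> (LINT x|lborel. 2 * k x)"
  proof (rule integral_abs_bound_integral[OF intg])
    show "integrable lborel (\<lambda>x. 2 * k x)" using intk by simp
    fix x
    have "\<bar>u t0 x * u' t0 x\<bar> \<le> 1 * k x"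
      unfolding abs_mult using ub[of t0 x] b0[of x] by (intro mult_mono) auto
    then show "\<bar>2 * u t0 x * u' t0 x\<bar> \<le> 2 * k x" by (simp add: abs_mult)
  qed
  also have "\<dots> \<le> 4" using k1 by simp
  finally show ?thesis using d by blast
qed



lemma nd_shift_bound:
  assumes \<sigma>: "\<sigma> > 0" and m: "\<bar>m - m0\<bar> \<le> 1"
  shows "normal_density m \<sigma> x \<le> (exp (1 / (2 * \<sigma>\<^sup>2)) / \<sigma>) * exp (- (1 / (4 * \<sigma>\<^sup>2)) * (x - m0)\<^sup>2)"
proof -
  have c: "1 / sqrt (2 * pi * \<sigma>\<^sup>2) \<le> 1 / \<sigma>"
  proof -
    have "sqrt (2 * pi * \<sigma>\<^sup>2) = sqrt (2 * pi) * \<sigma>" using \<sigma> by (simp add: real_sqrt_mult)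
    moreover have "sqrt (2 * pi) \<ge> 1" using pi_gt3 by simp
    ultimately have "sqrt (2 * pi * \<sigma>\<^sup>2) \<ge> \<sigma>" using \<sigma> by (simp add: mult_le_cancel_right1)
    then show ?thesis using \<sigma> by (intro divide_left_mono) auto
  qed
  have id: "2 * (x - m)\<^sup>2 + 2 * (m - m0)\<^sup>2 - (x - m0)\<^sup>2 = (x + m0 - 2 * m)\<^sup>2"
    by (simp add: power2_eq_square algebra_simps)
  have "\<bar>m - m0\<bar>\<^sup>2 \<le> 1\<^sup>2" by (rule power_mono) (use m in auto)
  then have mm: "(m - m0)\<^sup>2 \<le> 1" by simp
  have q: "(x - m0)\<^sup>2 \<le> 2 * (x - m)\<^sup>2 + 2"
    using id mm zero_le_power2[of "x + m0 - 2 * m"] by linarith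
  have e: "-(x - m)\<^sup>2 / (2 * \<sigma>\<^sup>2) \<le> 1 / (2 * \<sigma>\<^sup>2) + - (1 / (4 * \<sigma>\<^sup>2)) * (x - m0)\<^sup>2"
  proof -
    have "- (1 / (4 * \<sigma>\<^sup>2)) * (x - m0)\<^sup>2 = - ((x - m0)\<^sup>2 / (4 * \<sigma>\<^sup>2))" by simp
    moreover have "-(x - m)\<^sup>2 / (2 * \<sigma>\<^sup>2) = - ((x - m)\<^sup>2 / (2 * \<sigma>\<^sup>2))" by simp
    moreover have "(x - m0)\<^sup>2 / (4 * \<sigma>\<^sup>2) \<le> (2 * (x - m)\<^sup>2 + 2) / (4 * \<sigma>\<^sup>2)"
      using q \<sigma> by (intro divide_right_mono) auto
    moreover have "(2 * (x - m)\<^sup>2 + 2) / (4 * \<sigma>\<^sup>2) = (x - m)\<^sup>2 / (2 * \<sigma>\<^sup>2) + 1 / (2 * \<sigma>\<^sup>2)"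
      using \<sigma> by (simp add: field_simps)
    ultimately show ?thesis by linarith
  qed
  have "normal_density m \<sigma> x = 1 / sqrt (2 * pi * \<sigma>\<^sup>2) * exp (-(x - m)\<^sup>2 / (2 * \<sigma>\<^sup>2))"
    by (simp add: normal_density_def)
  also have "\<dots> \<le> 1 / \<sigma> * exp (1 / (2 * \<sigma>\<^sup>2) + - (1 / (4 * \<sigma>\<^sup>2)) * (x - m0)\<^sup>2)"
    using c e \<sigma> by (intro mult_mono) auto
  also have "\<dots> = (exp (1 / (2 * \<sigma>\<^sup>2)) / \<sigma>) * exp (- (1 / (4 * \<sigma>\<^sup>2)) * (x - m0)\<^sup>2)"
    unfolding exp_add by simp
  finally show ?thesis .
qed


lemma aux_rearr: "(1 / a * e) * t / s = 1 / (a * s) * (t * (e::real))"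
  by (cases "a = 0"; cases "s = 0") (simp_all add: field_simps)

lemma nd_scale_bound:
  assumes \<sigma>: "\<sigma>0 > 0" and s: "\<bar>s - \<sigma>0\<bar> < \<sigma>0 / 2"
  shows "normal_density \<mu> s x * \<bar>x - \<mu>\<bar> / s \<le> (4 / \<sigma>0\<^sup>2) * (\<bar>x - \<mu>\<bar> * exp (- (2 / (9 * \<sigma>0\<^sup>2)) * (x - \<mu>)\<^sup>2))"
proof -
  have s0: "s > \<sigma>0 / 2" "s < 3 * \<sigma>0 / 2" using s abs_less_iff[of "s - \<sigma>0"] by linarith+
  have sp: "s > 0" using s0 \<sigma> by linarith
  have c: "1 / (sqrt (2 * pi * s\<^sup>2) * s) \<le> 4 / \<sigma>0\<^sup>2"
  proof -
    have "sqrt (2 * pi * s\<^sup>2) = sqrt (2 * pi) * s" using sp by (simp add: real_sqrt_mult)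
    moreover have "sqrt (2 * pi) \<ge> 1" using pi_gt3 by simp
    ultimately have "sqrt (2 * pi * s\<^sup>2) * s \<ge> s * s" using sp by (simp add: mult_le_cancel_right1)
    moreover have "s * s \<ge> \<sigma>0\<^sup>2 / 4"
    proof -
      have "(\<sigma>0 / 2) * (\<sigma>0 / 2) \<le> s * s" using s0 \<sigma> by (intro mult_mono) auto
      then show ?thesis by (simp add: power2_eq_square)
    qed
    ultimately have "sqrt (2 * pi * s\<^sup>2) * s \<ge> \<sigma>0\<^sup>2 / 4" by linarith
    moreover have b4: "\<sigma>0\<^sup>2 / 4 > 0" using \<sigma> by simp
    ultimately have P: "sqrt (2 * pi * s\<^sup>2) * s > 0" by linarith
    have Q: "0 < (sqrt (2 * pi * s\<^sup>2) * s) * (\<sigma>0\<^sup>2 / 4)" using P b4 by (rule mult_pos_pos)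
    have "1 / (sqrt (2 * pi * s\<^sup>2) * s) \<le> 1 / (\<sigma>0\<^sup>2 / 4)"
      by (rule divide_left_mono[OF _ _ Q]) (use \<open>sqrt (2 * pi * s\<^sup>2) * s \<ge> \<sigma>0\<^sup>2 / 4\<close> in auto)
    then show ?thesis by simp
  qed
  have e: "-(x - \<mu>)\<^sup>2 / (2 * s\<^sup>2) \<le> - (2 / (9 * \<sigma>0\<^sup>2)) * (x - \<mu>)\<^sup>2"
  proof -
    have "s * s \<le> (3 * \<sigma>0 / 2) * (3 * \<sigma>0 / 2)" using s0 sp by (intro mult_mono) auto
    then have ss: "2 * s\<^sup>2 \<le> 9 * \<sigma>0\<^sup>2 / 2" by (simp add: power2_eq_square)
    have "(x - \<mu>)\<^sup>2 / (9 * \<sigma>0\<^sup>2 / 2) \<le> (x - \<mu>)\<^sup>2 / (2 * s\<^sup>2)"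
    proof -
      have "0 < (9 * \<sigma>0\<^sup>2 / 2) * (2 * s\<^sup>2)" using sp \<sigma> by simp
      then show ?thesis by (rule divide_left_mono[OF ss zero_le_power2])
    qed
    moreover have "(x - \<mu>)\<^sup>2 / (9 * \<sigma>0\<^sup>2 / 2) = (2 / (9 * \<sigma>0\<^sup>2)) * (x - \<mu>)\<^sup>2"
      using \<sigma> by (simp add: field_simps)
    moreover have "-(x - \<mu>)\<^sup>2 / (2 * s\<^sup>2) = - ((x - \<mu>)\<^sup>2 / (2 * s\<^sup>2))" by simp
    moreover have "- (2 / (9 * \<sigma>0\<^sup>2)) * (x - \<mu>)\<^sup>2 = - ((2 / (9 * \<sigma>0\<^sup>2)) * (x - \<mu>)\<^sup>2)" by simp
    ultimately show ?thesis by linarith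
  qed
  have "normal_density \<mu> s x * \<bar>x - \<mu>\<bar> / s =
      (1 / (sqrt (2 * pi * s\<^sup>2) * s)) * (\<bar>x - \<mu>\<bar> * exp (-(x - \<mu>)\<^sup>2 / (2 * s\<^sup>2)))"
  proof -
    have "normal_density \<mu> s x * \<bar>x - \<mu>\<bar> / s =
        (1 / sqrt (2 * pi * s\<^sup>2) * exp (-(x - \<mu>)\<^sup>2 / (2 * s\<^sup>2))) * \<bar>x - \<mu>\<bar> / s"
      by (simp add: normal_density_def)
    also have "\<dots> = (1 / (sqrt (2 * pi * s\<^sup>2) * s)) * (\<bar>x - \<mu>\<bar> * exp (-(x - \<mu>)\<^sup>2 / (2 * s\<^sup>2)))"
      by (rule aux_rearr)
    finally show ?thesis .
  qed
  also have "\<dots> \<le> (4 / \<sigma>0\<^sup>2) * (\<bar>x - \<mu>\<bar> * exp (- (2 / (9 * \<sigma>0\<^sup>2)) * (x - \<mu>)\<^sup>2))"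
    using c e \<sigma> by (intro mult_mono) auto
  finally show ?thesis .
qed



lemma der_shift:
  assumes "\<sigma> > 0"
  shows "((\<lambda>m. c + p * std_normal_cdf ((x - m) / \<sigma>)) has_real_derivative (- p * normal_density m \<sigma> x)) (at m)"
proof -
  have d0: "((\<lambda>m. x - m) has_real_derivative - 1) (at m)"
    by (rule DERIV_cong, (rule derivative_eq_intros refl)+) simp
  have d1: "((\<lambda>m. (x - m) / \<sigma>) has_real_derivative (- 1 / \<sigma>)) (at m)"
    by (rule DERIV_cdivide[OF d0])
  have "((\<lambda>m. c + p * std_normal_cdf ((x - m) / \<sigma>)) has_real_derivative
      (0 + p * (std_normal_density ((x - m) / \<sigma>) * (- 1 / \<sigma>)))) (at m)"
    by (intro DERIV_add DERIV_const DERIV_cmult DERIV_chain2[OF DERIV_Phi_basic d1])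
  moreover have "0 + p * (std_normal_density ((x - m) / \<sigma>) * (- 1 / \<sigma>)) = - p * normal_density m \<sigma> x"
    using nd_eq[OF assms, of m x] by simp
  ultimately show ?thesis by simp
qed

lemma der_scale:
  assumes "s > 0"
  shows "((\<lambda>s. c + p * std_normal_cdf ((x - \<mu>) / s)) has_real_derivative
           (- p * (normal_density \<mu> s x * (x - \<mu>) / s))) (at s)"
proof -
  have ne: "s \<noteq> 0" using assms by simp
  have d0: "((\<lambda>s. x - \<mu>) has_real_derivative 0) (at s)" by (rule DERIV_const)
  have d1: "((\<lambda>s. (x - \<mu>) / s) has_real_derivative (- (x - \<mu>) / s\<^sup>2)) (at s)"
    using DERIV_divide[OF d0 DERIV_ident ne] by (simp add: power2_eq_square)
  have "((\<lambda>s. c + p * std_normal_cdf ((x - \<mu>) / s)) has_real_derivative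
      (0 + p * (std_normal_density ((x - \<mu>) / s) * (- (x - \<mu>) / s\<^sup>2)))) (at s)"
    by (intro DERIV_add DERIV_const DERIV_cmult DERIV_chain2[OF DERIV_Phi_basic d1])
  moreover have "0 + p * (std_normal_density ((x - \<mu>) / s) * (- (x - \<mu>) / s\<^sup>2))
      = - p * (normal_density \<mu> s x * (x - \<mu>) / s)"
    using nd_eq[OF assms, of \<mu> x] ne by (simp add: power2_eq_square field_simps)
  ultimately show ?thesis by simp
qed

theorem theorem3:
  fixes n n' :: nat and p mu sg p' mu' sg' :: "nat \<Rightarrow> real" and j :: nat
  assumes "is_gm n p sg" and "is_gm n' p' sg'" and "j < n"
  shows "(\<exists>D. ((\<lambda>m. cramer2_sq n p (mu(j := m)) sg n' p' mu' sg')
                    has_real_derivative D) (at (mu j)) \<and> \<bar>D\<bar> \<le> 4)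
       \<and> (\<exists>D. ((\<lambda>s. cramer2_sq n p mu (sg(j := s)) n' p' mu' sg')
                    has_real_derivative D) (at (sg j)) \<and> \<bar>D\<bar> \<le> 4)"
proof -
  have P: "\<forall>i<n. 0 \<le> p i \<and> sg i > 0" "(\<Sum>i<n. p i) = 1" using assms(1) by (auto simp: is_gm_def)
  have P': "\<forall>i<n'. 0 \<le> p' i" "(\<Sum>i<n'. p' i) = 1" using assms(2) by (auto simp: is_gm_def)
  have pj: "0 \<le> p j" "p j \<le> 1"
  proof -
    show "0 \<le> p j" using P assms(3) by auto
    have "(\<Sum>i\<in>{j}. p i) \<le> (\<Sum>i<n. p i)"
      using P assms(3) by (intro sum_mono2) auto
    then show "p j \<le> 1" using P by simp
  qed
  define \<sigma> where "\<sigma> = sg j"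
  define \<mu> where "\<mu> = mu j"
  have \<sigma>: "\<sigma> > 0" using P assms(3) by (auto simp: \<sigma>_def)
  define H where "H x = gm_cdf n' p' mu' sg' x" for x
  define A where "A x = (\<Sum>i\<in>{..<n}-{j}. p i * std_normal_cdf ((x - mu i) / sg i))" for x
  have split: "gm_cdf n p mu2 sg2 x = p j * std_normal_cdf ((x - mu2 j) / sg2 j)
       + (\<Sum>i\<in>{..<n}-{j}. p i * std_normal_cdf ((x - mu2 i) / sg2 i))" for mu2 sg2 x
    unfolding gm_cdf_def using assms(3) by (simp add: sum.remove)
  have Amu: "gm_cdf n p (mu(j := m)) sg x = A x + p j * std_normal_cdf ((x - m) / \<sigma>)" for m x
    unfolding split A_def \<sigma>_def by (auto intro!: sum.cong)
  have Asg: "gm_cdf n p mu (sg(j := s)) x = A x + p j * std_normal_cdf ((x - \<mu>) / s)" for s x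
    unfolding split A_def \<mu>_def by (auto intro!: sum.cong)
  have ub: "\<bar>gm_cdf n p mu2 sg2 x - H x\<bar> \<le> 1" for mu2 sg2 x
  proof -
    have "0 \<le> gm_cdf n p mu2 sg2 x" "gm_cdf n p mu2 sg2 x \<le> 1"
      using P by (auto intro!: gm_bounds)
    moreover have "0 \<le> H x" "H x \<le> 1" unfolding H_def using P' by (auto intro!: gm_bounds)
    ultimately show ?thesis by linarith
  qed
  have part1: "\<exists>D. ((\<lambda>m. cramer2_sq n p (mu(j := m)) sg n' p' mu' sg')
                    has_real_derivative D) (at (mu j)) \<and> \<bar>D\<bar> \<le> 4"
  proof -
    define u where "u m x = gm_cdf n p (mu(j := m)) sg x - H x" for m x
    define u' where "u' m x = - p j * normal_density m \<sigma> x" for m x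
    define v where "v x = (exp (1 / (2 * \<sigma>\<^sup>2)) / \<sigma>) * exp (- (1 / (4 * \<sigma>\<^sup>2)) * (x - \<mu>)\<^sup>2)" for x
    have eqf: "(\<lambda>m. cramer2_sq n p (mu(j := m)) sg n' p' mu' sg') = (\<lambda>t. LINT x|lborel. (u t x)\<^sup>2)"
      by (simp add: cramer2_sq_def u_def H_def)
    have "\<exists>D. ((\<lambda>t. LINT x|lborel. (u t x)\<^sup>2) has_real_derivative D) (at \<mu>) \<and> \<bar>D\<bar> \<le> 4"
    proof (rule main_deriv[where \<delta>=1 and u'=u' and v=v and k="normal_density \<mu> \<sigma>"])
      show "u t \<in> borel_measurable lborel" for t unfolding u_def H_def by measurable
      show "u' \<mu> \<in> borel_measurable lborel" unfolding u'_def by measurable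
      show "integrable lborel (\<lambda>x. (u \<mu> x)\<^sup>2)"
        unfolding u_def H_def \<mu>_def using cramer_integrable[OF assms(1,2)] by simp
      show "\<bar>u t x\<bar> \<le> 1" for t x unfolding u_def by (rule ub)
      show "((\<lambda>t. u t x) has_real_derivative u' t x) (at t)" if "\<bar>t - \<mu>\<bar> < 1" for t x
      proof -
        have e: "(\<lambda>t. A x + p j * std_normal_cdf ((x - t) / \<sigma>) - H x) =
                 (\<lambda>t. (A x - H x) + p j * std_normal_cdf ((x - t) / \<sigma>))" by (rule ext) simp
        show ?thesis
          unfolding u_def u'_def Amu e using der_shift[OF \<sigma>, of "A x - H x" "p j" x t] by simp
      qed
      show "\<bar>u' t x\<bar> \<le> v x" if "\<bar>t - \<mu>\<bar> < 1" for t x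
      proof -
        have "\<bar>u' t x\<bar> = p j * normal_density t \<sigma> x" unfolding u'_def using pj by (simp add: abs_mult)
        also have "\<dots> \<le> 1 * normal_density t \<sigma> x" using pj by (intro mult_right_mono) auto
        also have "\<dots> \<le> v x" unfolding v_def using nd_shift_bound[OF \<sigma>, of t \<mu> x] that by simp
        finally show ?thesis .
      qed
      show "integrable lborel v" unfolding v_def
        by (intro Bochner_Integration.integrable_mult_right int_gauss) (use \<sigma> in simp)
      show "\<bar>u' \<mu> x\<bar> \<le> normal_density \<mu> \<sigma> x" for x
        unfolding u'_def using pj by (simp add: abs_mult mult_left_le_one_le)
      show "integrable lborel (normal_density \<mu> \<sigma>)" by (rule integrable_normal_density) (rule \<sigma>)
      show "(LINT x|lborel. normal_density \<mu> \<sigma> x) \<le> 1" using \<sigma> by simp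
    qed simp
    then show ?thesis unfolding eqf \<mu>_def .
  qed
  have part2: "\<exists>D. ((\<lambda>s. cramer2_sq n p mu (sg(j := s)) n' p' mu' sg')
                    has_real_derivative D) (at (sg j)) \<and> \<bar>D\<bar> \<le> 4"
  proof -
    define u where "u s x = gm_cdf n p mu (sg(j := s)) x - H x" for s x
    define u' where "u' s x = - p j * (normal_density \<mu> s x * (x - \<mu>) / s)" for s x
    define v where "v x = (4 / \<sigma>\<^sup>2) * (\<bar>x - \<mu>\<bar> * exp (- (2 / (9 * \<sigma>\<^sup>2)) * (x - \<mu>)\<^sup>2))" for x
    define k where "k x = normal_density \<mu> \<sigma> x * \<bar>x - \<mu>\<bar> / \<sigma>" for x
    have eqf: "(\<lambda>s. cramer2_sq n p mu (sg(j := s)) n' p' mu' sg') = (\<lambda>t. LINT x|lborel. (u t x)\<^sup>2)"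
      by (simp add: cramer2_sq_def u_def H_def)
    have "\<exists>D. ((\<lambda>t. LINT x|lborel. (u t x)\<^sup>2) has_real_derivative D) (at \<sigma>) \<and> \<bar>D\<bar> \<le> 4"
    proof (rule main_deriv[where \<delta>="\<sigma> / 2" and u'=u' and v=v and k=k])
      show "u t \<in> borel_measurable lborel" for t unfolding u_def H_def by measurable
      show "u' \<sigma> \<in> borel_measurable lborel" unfolding u'_def by measurable
      show "integrable lborel (\<lambda>x. (u \<sigma> x)\<^sup>2)"
        unfolding u_def H_def \<sigma>_def using cramer_integrable[OF assms(1,2)] by simp
      show "\<bar>u t x\<bar> \<le> 1" for t x unfolding u_def by (rule ub)
      show "((\<lambda>t. u t x) has_real_derivative u' t x) (at t)" if "\<bar>t - \<sigma>\<bar> < \<sigma> / 2" for t x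
      proof -
        have "t > 0" using that abs_less_iff[of "t - \<sigma>"] \<sigma> by linarith
        then show ?thesis
        proof -
          have e: "(\<lambda>t. A x + p j * std_normal_cdf ((x - \<mu>) / t) - H x) =
                 (\<lambda>t. (A x - H x) + p j * std_normal_cdf ((x - \<mu>) / t))" by (rule ext) simp
          show ?thesis
            unfolding u_def u'_def Asg e using der_scale[OF \<open>t > 0\<close>, of "A x - H x" "p j" x \<mu>] by simp
        qed
      qed
      show "\<bar>u' t x\<bar> \<le> v x" if "\<bar>t - \<sigma>\<bar> < \<sigma> / 2" for t x
      proof -
        have tp: "t > 0" using that abs_less_iff[of "t - \<sigma>"] \<sigma> by linarith
        have "\<bar>u' t x\<bar> = p j * (normal_density \<mu> t x * \<bar>x - \<mu>\<bar> / t)"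
          unfolding u'_def using pj tp by (simp add: abs_mult abs_divide)
        also have "\<dots> \<le> 1 * (normal_density \<mu> t x * \<bar>x - \<mu>\<bar> / t)"
          using pj tp by (intro mult_right_mono) auto
        also have "\<dots> \<le> v x" unfolding v_def using nd_scale_bound[OF \<sigma> that, of \<mu> x] by simp
        finally show ?thesis .
      qed
      show "integrable lborel v" unfolding v_def
        by (intro Bochner_Integration.integrable_mult_right int_gauss_abs) (use \<sigma> in simp)
      show "\<bar>u' \<sigma> x\<bar> \<le> k x" for x
      proof -
        have "\<bar>u' \<sigma> x\<bar> = p j * k x"
          unfolding u'_def k_def using pj \<sigma> by (simp add: abs_mult abs_divide)
        moreover have "0 \<le> k x" unfolding k_def using \<sigma> by simp
        ultimately show ?thesis using pj by (simp add: mult_left_le_one_le)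
      qed
      have kk: "k x = (normal_density \<mu> \<sigma> x * \<bar>x - \<mu>\<bar> ^ (2 * 0 + 1)) / \<sigma>" for x
        unfolding k_def by simp
      show "integrable lborel k" unfolding kk[abs_def]
        by (intro integrable_divide integrable_normal_moment_abs) (rule \<sigma>)
      have "(LINT x|lborel. k x) = sqrt (2 / pi)"
      proof -
        have m1: "(LINT x|lborel. normal_density \<mu> \<sigma> x * \<bar>x - \<mu>\<bar>) = \<sigma> * sqrt (2 / pi)"
          using integral_normal_moment_abs_odd[of \<sigma> \<mu> 0] \<sigma> by simp
        show ?thesis unfolding k_def integral_divide_zero m1 using \<sigma> by simp
      qed
      also have "\<dots> \<le> 1" using pi_gt3 by simp
      finally show "(LINT x|lborel. k x) \<le> 1" .
    qed (use \<sigma> in simp)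
    then show ?thesis unfolding eqf \<sigma>_def .
  qed
  show ?thesis using part1 part2 by blast
qed


end
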